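(* For every integer $k\ge 1$, there is a protocol solving MEQ-AD$(3,2^k)$ in which every transmitted symbol is a single bit and the total number of transmitted bits is $3\lceil \lceil k\log_6 2\rceil \log_2 3\rceil$; this number is less than $1.840k+7.755$.
   Context: There are $n$ nodes labeled $1,\dots,n$ (here $n=3$); node $i$ privately holds an input $x_i\in\{1,\dots,M\}$ (here $M=2^k$). Communication is over private point-to-point links of a fully connected synchronous network. A deterministic protocol $P$ is a fixed finite schedule of steps $l=1,\dots,L(P)$; in step $l$ a prescribed node $T_l$ sends to a prescribed node $R_l\neq T_l$ one symbol $f_l(x_{T_l},T_l^+(l))$, where $T_l^+(l)$ is the sequence of symbols $T_l$ has received in steps $1,\dots,l-1$; only $R_l$ receives it. At the end each node $i$ outputs a bit $EQ_i$ depending on $x_i$ and the symbols it received. $P$ solves MEQ-AD$(n,M)$ if for every input, $EQ_1=\cdots=EQ_n=0$ iff $x_1=\cdots=x_n$. *)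

theory Defs
  imports Complex_Main
begin

text \<open>A step of a deterministic protocol in which every symbol is a single bit:
  (sender T, receiver R, message function f). The sender transmits
  f (own input) (sequence of symbols it has received so far).\<close>
type_synonym bit_step = "nat \<times> nat \<times> (nat \<Rightarrow> bool list \<Rightarrow> bool)"

definition valid_protocol :: "nat \<Rightarrow> bit_step list \<Rightarrow> bool" where
  "valid_protocol n P \<longleftrightarrow>
     (\<forall>(T, R, f) \<in> set P. T \<in> {1..n} \<and> R \<in> {1..n} \<and> T \<noteq> R)"

definition exec_step ::
  "(nat \<Rightarrow> nat) \<Rightarrow> (nat \<Rightarrow> bool list) \<Rightarrow> bit_step \<Rightarrow> (nat \<Rightarrow> bool list)" where
  "exec_step x st s = (case s of (T, R, f) \<Rightarrow> st(R := st R @ [f (x T) (st T)]))"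

definition received :: "bit_step list \<Rightarrow> (nat \<Rightarrow> nat) \<Rightarrow> nat \<Rightarrow> bool list" where
  "received P x = fold (\<lambda>s st. exec_step x st s) P (\<lambda>_. [])"

text \<open>Protocol P with output functions EQ (EQ i (x i) (received symbols); True = bit 1)
  solves MEQ-AD(n, M).\<close>
definition solves_MEQ_AD ::
  "nat \<Rightarrow> nat \<Rightarrow> bit_step list \<Rightarrow> (nat \<Rightarrow> nat \<Rightarrow> bool list \<Rightarrow> bool) \<Rightarrow> bool" where
  "solves_MEQ_AD n M P EQ \<longleftrightarrow> valid_protocol n P \<and>
     (\<forall>x :: nat \<Rightarrow> nat. (\<forall>i\<in>{1..n}. x i \<in> {1..M}) \<longrightarrow>
        ((\<forall>i\<in>{1..n}. \<not> EQ i (x i) (received P x i)) \<longleftrightarrow>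
         (\<forall>i\<in>{1..n}. \<forall>j\<in>{1..n}. x i = x j)))"

end

theory Submission imports Defs begin
fun tern :: "nat \<Rightarrow> nat \<Rightarrow> nat" where
  "tern 0 x = 0"
| "tern (Suc m) x = x mod 2 + 3 * tern m (x div 2)"

lemma tern_bound: "2 * tern m x < 3^m"
proof (induction m arbitrary: x)
  case 0 thus ?case by simp
next
  case (Suc m)
  have "x mod 2 \<le> 1" by simp
  moreover have "2 * tern m (x div 2) + 1 \<le> 3^m" using Suc.IH[of "x div 2"] by simp
  ultimately show ?case by simp
qed

lemma tern_inj: "x < 2^m \<Longrightarrow> y < 2^m \<Longrightarrow> tern m x = tern m y \<Longrightarrow> x = y"
proof (induction m arbitrary: x y)
  case 0 thus ?case by simp
next
  case (Suc m)
  have e: "x mod 2 + 3 * tern m (x div 2) = y mod 2 + 3 * tern m (y div 2)" using Suc.prems by simp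
  have m2: "x mod 2 = y mod 2"
  proof -
    have "(x mod 2 + 3 * tern m (x div 2)) mod 3 = (y mod 2 + 3 * tern m (y div 2)) mod 3" using e by simp
    hence "x mod 2 mod 3 = y mod 2 mod 3" by simp
    thus ?thesis by simp
  qed
  hence "tern m (x div 2) = tern m (y div 2)" using e by simp
  moreover have "x div 2 < 2^m" "y div 2 < 2^m" using Suc.prems by auto
  ultimately have "x div 2 = y div 2" using Suc.IH by blast
  thus ?case using m2 by (metis div_mult_mod_eq)
qed

lemma aux: assumes "(a::nat) \<le> 1" "b \<le> 1" "c \<le> 1" "a + 3*X + (b + 3*Y) = 2*(c+3*Z)" shows "a = c \<and> b = c \<and> X + Y = 2*Z"
proof -
  have e: "(a + b) + 3*(X+Y) = 2*c + 3*(2*Z)" using assms(4) by (simp add: algebra_simps)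
  have "(a + b) mod 3 = ((a + b) + 3*(X+Y)) mod 3" by (rule mod_mult_self2[symmetric])
  also have "\<dots> = (2*c + 3*(2*Z)) mod 3" using e by (rule arg_cong)
  also have "\<dots> = (2*c) mod 3" by (rule mod_mult_self2)
  finally have h: "(a + b) mod 3 = (2*c) mod 3" .
  have "a = 0 \<or> a = 1" "b = 0 \<or> b = 1" "c = 0 \<or> c = 1" using assms(1-3) by auto
  hence "a = c \<and> b = c" using h by auto
  thus ?thesis using assms(4) by simp
qed

lemma tern_ap: "tern m x + tern m y = 2 * tern m z \<Longrightarrow> tern m x = tern m z \<and> tern m y = tern m z"
proof (induction m arbitrary: x y z)
  case 0 thus ?case by simp
next
  case (Suc m)
  obtain X Y Z where XYZ: "X = tern m (x div 2)" "Y = tern m (y div 2)" "Z = tern m (z div 2)" by blast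
  have e: "x mod 2 + 3 * X + (y mod 2 + 3 * Y) = 2 * (z mod 2 + 3 * Z)" using Suc.prems XYZ by simp
  have m2: "x mod 2 = z mod 2 \<and> y mod 2 = z mod 2 \<and> X + Y = 2 * Z"
    by (rule aux[OF _ _ _ e]) simp_all
  hence "X + Y = 2 * Z" by simp
  hence "X = Z \<and> Y = Z" using Suc.IH[of "x div 2" "y div 2" "z div 2"] XYZ by simp
  thus ?case using m2 XYZ by simp
qed

lemma modeq_int: "(A::nat) mod N = B mod N \<Longrightarrow> int N dvd int A - int B"
proof -
  assume "A mod N = B mod N"
  hence "int A mod int N = int B mod int N" by (simp add: zmod_int[symmetric])
  thus ?thesis by (simp add: mod_eq_dvd_iff)
qed

lemma small_dvd: "(N::int) dvd z \<Longrightarrow> \<bar>z\<bar> < N \<Longrightarrow> z = 0"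
proof (rule ccontr)
  assume a: "N dvd z" "\<bar>z\<bar> < N" "z \<noteq> 0"
  have "\<bar>N\<bar> \<le> \<bar>z\<bar>" using dvd_imp_le_int[OF a(3) a(1)] .
  thus False using a(2) by linarith
qed
definition Qf :: "nat \<Rightarrow> nat \<Rightarrow> nat" where "Qf m a = a mod 3^m"
definition Pf :: "nat \<Rightarrow> nat \<Rightarrow> nat" where "Pf m a = tern m (a div 3^m)"

lemma key:
  assumes ab: "a < 6^m" "c < 6^m" "d < 6^m"
    and h1: "Qf m a = Qf m c"
    and h2: "(Qf m c + Pf m c) mod 3^m = (Qf m d + Pf m d) mod 3^m"
    and h3: "(Qf m d + 2*Pf m d) mod 3^m = (Qf m a + 2*Pf m a) mod 3^m"
  shows "a = c \<and> c = d"
proof -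
  define N where "N = (3::nat)^m"
  define Qa where "Qa = Qf m a"
  define Qc where "Qc = Qf m c"
  define Qd where "Qd = Qf m d"
  define Pa where "Pa = Pf m a"
  define Pc where "Pc = Pf m c"
  define Pd where "Pd = Pf m d"
  have 1: "int N dvd int (Qc + Pc) - int (Qd + Pd)" using modeq_int[OF h2] unfolding N_def Qa_def Qc_def Qd_def Pa_def Pc_def Pd_def .
  have 2: "int N dvd int (Qd + 2*Pd) - int (Qa + 2*Pa)" using modeq_int[OF h3] unfolding N_def Qa_def Qc_def Qd_def Pa_def Pc_def Pd_def .
  have qac: "Qa = Qc" using h1 unfolding Qa_def Qc_def .
  have "int (Qc + Pc) - int (Qd + Pd) + (int (Qd + 2*Pd) - int (Qa + 2*Pa)) = int Pc + int Pd - 2 * int Pa"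
    using qac by simp
  hence 3: "int N dvd int Pc + int Pd - 2 * int Pa" using dvd_add[OF 1 2] by argo
  have bP: "2 * Pa < N" "2 * Pc < N" "2 * Pd < N" unfolding Pa_def Pc_def Pd_def Pf_def N_def by (simp_all add: tern_bound)
  have "\<bar>int Pc + int Pd - 2 * int Pa\<bar> < int N" using bP by linarith
  hence "int Pc + int Pd - 2 * int Pa = 0" using small_dvd[OF 3] by blast
  hence "Pc + Pd = 2 * Pa" by linarith
  hence "Pc = Pa \<and> Pd = Pa" unfolding Pa_def Pc_def Pd_def Pf_def by (rule tern_ap)
  hence pe: "Pc = Pa" "Pd = Pa" by auto
  have six: "(6::nat)^m = 2^m * 3^m" by (simp add: power_mult_distrib[symmetric])
  have rb: "a div N < 2^m" "c div N < 2^m" "d div N < 2^m"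
    using ab unfolding six N_def by (simp_all add: less_mult_imp_div_less)
  have "a div N = c div N" using tern_inj[OF rb(1) rb(2)] pe unfolding Pa_def Pc_def Pf_def N_def by simp
  moreover have "d div N = a div N" using tern_inj[OF rb(3) rb(1)] pe unfolding Pa_def Pd_def Pf_def N_def by simp
  moreover have "Qc = Qd"
  proof -
    have "int N dvd int Qc - int Qd" using 1 pe by simp
    moreover have "Qc < N" "Qd < N" unfolding Qc_def Qd_def Qf_def N_def by simp_all
    hence "\<bar>int Qc - int Qd\<bar> < int N" by linarith
    ultimately have "int Qc - int Qd = 0" using small_dvd by blast
    thus ?thesis by linarith
  qed
  ultimately show ?thesis using qac unfolding Qa_def Qc_def Qd_def Qf_def N_def
    by (metis div_mult_mod_eq)
qed
fun bits :: "nat \<Rightarrow> nat \<Rightarrow> bool list" where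
  "bits 0 v = []"
| "bits (Suc b) v = odd v # bits b (v div 2)"

lemma length_bits[simp]: "length (bits b v) = b"
  by (induction b arbitrary: v) auto

lemma bits_inj: "v < 2^b \<Longrightarrow> w < 2^b \<Longrightarrow> bits b v = bits b w \<Longrightarrow> v = w"
proof (induction b arbitrary: v w)
  case 0 thus ?case by simp
next
  case (Suc b)
  have o: "odd v = odd w" and r: "bits b (v div 2) = bits b (w div 2)" using Suc.prems(3) by auto
  have "v div 2 < 2^b" "w div 2 < 2^b" using Suc.prems(1,2) by auto
  hence "v div 2 = w div 2" using Suc.IH r by blast
  moreover have "v mod 2 = w mod 2" using o by (metis odd_iff_mod_2_eq_one not_mod_2_eq_1_eq_0)
  ultimately show ?case by (metis div_mult_mod_eq)
qed

definition link :: "nat \<Rightarrow> nat \<Rightarrow> nat \<Rightarrow> (nat \<Rightarrow> nat) \<Rightarrow> bit_step list" where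
  "link b T R h = map (\<lambda>t. (T, R, \<lambda>a (_::bool list). bits b (h a) ! t)) [0..<b]"

lemma fold_exec:
  assumes "\<forall>(T,R,f)\<in>set P. \<forall>a l. f a l = f a []"
  shows "fold (\<lambda>s st. exec_step x st s) P st0 =
    (\<lambda>i. st0 i @ map (\<lambda>(T,R,f). f (x T) []) (filter (\<lambda>(T,R,f). R = i) P))"
  using assms
proof (induction P arbitrary: st0)
  case Nil thus ?case by simp
next
  case (Cons s P)
  obtain T R f where s: "s = (T, R, f)" by (cases s) auto
  have fT: "f (x T) (st0 T) = f (x T) []" using Cons.prems s by auto
  have "fold (\<lambda>s st. exec_step x st s) (s # P) st0 = fold (\<lambda>s st. exec_step x st s) P (exec_step x st0 s)" by simp
  also have "\<dots> = (\<lambda>i. (exec_step x st0 s) i @ map (\<lambda>(T,R,f). f (x T) []) (filter (\<lambda>(T,R,f). R = i) P))"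
    using Cons.IH Cons.prems by simp
  also have "\<dots> = (\<lambda>i. st0 i @ map (\<lambda>(T,R,f). f (x T) []) (filter (\<lambda>(T,R,f). R = i) (s # P)))"
    by (rule ext) (auto simp: exec_step_def s fT)
  finally show ?case .
qed

definition G1 :: "nat \<Rightarrow> nat \<Rightarrow> nat" where "G1 m a = Qf m (a - 1)"
definition G2 :: "nat \<Rightarrow> nat \<Rightarrow> nat" where "G2 m a = (Qf m (a - 1) + Pf m (a - 1)) mod 3^m"
definition G3 :: "nat \<Rightarrow> nat \<Rightarrow> nat" where "G3 m a = (Qf m (a - 1) + 2 * Pf m (a - 1)) mod 3^m"

definition Prot :: "nat \<Rightarrow> nat \<Rightarrow> bit_step list" where
  "Prot b m = link b 1 2 (G1 m) @ link b 2 3 (G2 m) @ link b 3 1 (G3 m)"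

definition EQf :: "nat \<Rightarrow> nat \<Rightarrow> nat \<Rightarrow> nat \<Rightarrow> bool list \<Rightarrow> bool" where
  "EQf b m i a r = (if i = 1 then r \<noteq> bits b (G3 m a) else if i = 2 then r \<noteq> bits b (G1 m a) else r \<noteq> bits b (G2 m a))"

lemma length_Prot: "length (Prot b m) = 3 * b"
  by (simp add: Prot_def link_def)

lemma map_nth_bits: "map (\<lambda>t. bits b v ! t) [0..<b] = bits b v"
  by (metis length_bits map_nth)

lemma received_Prot:
  "received (Prot b m) x 1 = bits b (G3 m (x 3))"
  "received (Prot b m) x 2 = bits b (G1 m (x 1))"
  "received (Prot b m) x 3 = bits b (G2 m (x 2))"
proof -
  have h: "\<forall>(T,R,f)\<in>set (Prot b m). \<forall>a l. f a l = f a []" by (auto simp: Prot_def link_def)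
  show "received (Prot b m) x 1 = bits b (G3 m (x 3))"
    unfolding received_def fold_exec[OF h] by (simp add: Prot_def link_def filter_map o_def map_nth_bits)
  show "received (Prot b m) x 2 = bits b (G1 m (x 1))"
    unfolding received_def fold_exec[OF h] by (simp add: Prot_def link_def filter_map o_def map_nth_bits)
  show "received (Prot b m) x 3 = bits b (G2 m (x 2))"
    unfolding received_def fold_exec[OF h] by (simp add: Prot_def link_def filter_map o_def map_nth_bits)
qed

lemma received_Prot_Suc0: "received (Prot b m) x (Suc 0) = bits b (G3 m (x 3))"
  using received_Prot(1) by simp

lemma solves_Prot:
  assumes km: "(2::nat)^k \<le> 6^m" and mb: "(3::nat)^m \<le> 2^b"
  shows "solves_MEQ_AD 3 (2^k) (Prot b m) (EQf b m)"
proof -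
  have I3: "{1..3::nat} = {1,2,3}" by auto
  have valid: "valid_protocol 3 (Prot b m)" by (auto simp: valid_protocol_def Prot_def link_def)
  have lt: "G1 m a < 2^b" "G2 m a < 2^b" "G3 m a < 2^b" for a
  proof -
    have modlt: "(u::nat) mod 3^m < 2^b" for u
      using mb by (meson less_le_trans mod_less_divisor zero_less_numeral zero_less_power)
    show "G1 m a < 2^b" "G2 m a < 2^b" "G3 m a < 2^b" unfolding G1_def G2_def G3_def Qf_def by (rule modlt)+
  qed
  have binj: "bits b (G a) = bits b (G c) \<longleftrightarrow> G a = G c" if "\<And>a. G a < 2^b" for G and a c
    using bits_inj that by metis
  have main: "(\<not> EQf b m 1 (x 1) (received (Prot b m) x 1) \<and> \<not> EQf b m 2 (x 2) (received (Prot b m) x 2) \<and>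
      \<not> EQf b m 3 (x 3) (received (Prot b m) x 3)) \<longleftrightarrow> (x 1 = x 2 \<and> x 2 = x 3)"
    if x: "x 1 \<in> {1..2^k}" "x 2 \<in> {1..2^k}" "x 3 \<in> {1..2^k}" for x
  proof
    assume "\<not> EQf b m 1 (x 1) (received (Prot b m) x 1) \<and> \<not> EQf b m 2 (x 2) (received (Prot b m) x 2) \<and>
      \<not> EQf b m 3 (x 3) (received (Prot b m) x 3)"
    hence e: "G3 m (x 3) = G3 m (x 1)" "G1 m (x 1) = G1 m (x 2)" "G2 m (x 2) = G2 m (x 3)"
      by (auto simp: EQf_def received_Prot received_Prot_Suc0 binj[OF lt(1)] binj[OF lt(2)] binj[OF lt(3)])
    have ab: "x 1 - 1 < 6^m" "x 2 - 1 < 6^m" "x 3 - 1 < 6^m" using x km by auto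
    have "x 1 - 1 = x 2 - 1 \<and> x 2 - 1 = x 3 - 1"
      by (rule key[OF ab]) (use e in \<open>simp_all add: G1_def G2_def G3_def\<close>)
    thus "x 1 = x 2 \<and> x 2 = x 3" using x by auto
  next
    assume "x 1 = x 2 \<and> x 2 = x 3"
    thus "\<not> EQf b m 1 (x 1) (received (Prot b m) x 1) \<and> \<not> EQf b m 2 (x 2) (received (Prot b m) x 2) \<and>
      \<not> EQf b m 3 (x 3) (received (Prot b m) x 3)"
      by (auto simp: EQf_def received_Prot received_Prot_Suc0)
  qed
  show ?thesis unfolding solves_MEQ_AD_def
  proof (intro conjI valid allI impI)
    fix x :: "nat \<Rightarrow> nat" assume "\<forall>i\<in>{1..3}. x i \<in> {1..2 ^ k}"
    hence x: "x 1 \<in> {1..2^k}" "x 2 \<in> {1..2^k}" "x 3 \<in> {1..2^k}" by auto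
    show "(\<forall>i\<in>{1..3}. \<not> EQf b m i (x i) (received (Prot b m) x i)) = (\<forall>i\<in>{1..3}. \<forall>j\<in>{1..3}. x i = x j)"
      unfolding I3 using main[OF x] by auto
  qed
qed
lemma l23: "log 2 3 < (1.585::real)" "log 2 3 > (0::real)"
proof -
  have "200 * log 2 3 = log 2 ((3::real)^200)" by (subst log_nat_power) auto
  also have "\<dots> < log 2 (2^317)"
    by (rule log_less) simp_all
  also have "log 2 ((2::real)^317) = 317" by (subst log_pow_cancel) auto
  finally have "200 * log 2 3 < (317::real)" .
  thus "log 2 3 < (1.585::real)" by simp
  show "log 2 3 > (0::real)" by simp
qed

lemma l62: "log 6 2 = 1 / (1 + log 2 (3::real))"
proof -
  have "log 2 (6::real) = log 2 (2*3)" by simp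
  also have "\<dots> = 1 + log 2 3" by (subst log_mult) auto
  finally have "log 2 (6::real) = 1 + log 2 3" .
  moreover have "log 6 2 = 1 / log 2 (6::real)" by (simp add: log_def)
  ultimately show ?thesis by simp
qed


lemma pow_le_gen:
  fixes k A B :: nat and m :: int
  assumes B: "1 < B" and A: "0 < A" and h: "real k * log B A \<le> m" and m0: "0 \<le> m"
  shows "A^k \<le> B ^ nat m"
proof -
  have "real A ^ k = (B powr log B A) powr k" using A B by (simp add: powr_realpow)
  also have "\<dots> = B powr (log B A * real k)" by (rule powr_powr)
  also have "\<dots> = B powr (real k * log B A)" by (simp add: mult.commute)
  also have "\<dots> \<le> B powr (real_of_int m)" using h B by simp
  also have "\<dots> = real B ^ nat m" using m0 B by (simp add: powr_realpow[symmetric])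
  finally have "real (A^k) \<le> real (B ^ nat m)" by simp
  thus ?thesis by linarith
qed

theorem mainTheorem11:
  fixes k :: nat
  assumes "k \<ge> 1"
  shows "\<exists>P EQ. solves_MEQ_AD 3 (2 ^ k) P EQ \<and>
     int (length P) = 3 * \<lceil>of_int \<lceil>real k * log 6 2\<rceil> * log 2 3\<rceil> \<and>
     real (length P) < 1.840 * real k + 7.755"
proof -
  define l where "l = log 2 (3::real)"
  define mi where "mi = \<lceil>real k * log 6 2\<rceil>"
  define bi where "bi = \<lceil>of_int mi * l\<rceil>"
  have l: "0 < l" "l < 1.585" using l23 unfolding l_def by auto
  have lam: "log 6 2 = 1 / (1 + l)" using l62 unfolding l_def .
  have lpos: "log 6 (2::real) > 0" by simp
  have "real k * log 6 2 > 0" using assms lpos by simp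
  hence mi1: "mi \<ge> 1" unfolding mi_def by simp
  have "of_int mi * l > 0" using mi1 l by simp
  hence bi0: "bi \<ge> 0" unfolding bi_def by simp
  have km: "(2::nat)^k \<le> 6 ^ nat mi"
    by (rule pow_le_gen) (use mi1 in \<open>auto simp: mi_def le_of_int_ceiling\<close>)
  have mbr: "real (nat mi) * log 2 3 \<le> real_of_int bi" using mi1 unfolding bi_def l_def
      by (simp add: le_of_int_ceiling)
  have mb: "(3::nat)^(nat mi) \<le> 2 ^ nat bi"
    by (rule pow_le_gen) (use mbr bi0 in auto)
  have len: "length (Prot (nat bi) (nat mi)) = 3 * nat bi" by (rule length_Prot)
  have c1: "of_int bi < of_int mi * l + 1" using ceiling_correct[of "of_int mi * l"] unfolding bi_def by linarith
  have c2: "of_int mi < real k * log 6 2 + 1" using ceiling_correct[of "real k * log 6 2"] unfolding mi_def by linarith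
  have "of_int mi * l < (real k * log 6 2 + 1) * l" using c2 l by (simp add: mult_strict_right_mono)
  moreover have "3 * (log 6 2 * l) \<le> 1.84"
  proof -
    have "3 * l \<le> 1.84 * (1 + l)" using l by (simp add: algebra_simps)
    hence "3 * l / (1 + l) \<le> 1.84" using l by (simp add: divide_le_eq)
    thus ?thesis unfolding lam by simp
  qed
  hence "real k * (3 * (log 6 2 * l)) \<le> real k * 1.84" by (rule mult_left_mono) simp_all
  ultimately have bnd: "3 * of_int bi < 1.840 * real k + 7.755" using c1 l
    by (simp add: algebra_simps) 
  show ?thesis
  proof (intro exI conjI)
    show "solves_MEQ_AD 3 (2 ^ k) (Prot (nat bi) (nat mi)) (EQf (nat bi) (nat mi))"
      by (rule solves_Prot[OF km mb])
    show "int (length (Prot (nat bi) (nat mi))) = 3 * \<lceil>of_int \<lceil>real k * log 6 2\<rceil> * log 2 3\<rceil>"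
      using len bi0 unfolding bi_def mi_def l_def by simp
    show "real (length (Prot (nat bi) (nat mi))) < 1.840 * real k + 7.755"
      using len bi0 bnd by simp
  qed
qed

end
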